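(* Let $r\in(0,1]$, $t>0$, $a\ge0$ and $x>0$. If $S(x;r,t,a)=0$, where \[ S(x;r,t,a)=4ax^3-\{8a^2+4a(3r+2)t-t^2\}x^2+2\big[2a^3-2a^2(5r-2)t+a\{r(6r-1)+1\}t^2-(r+1)t^3\big]x+(r-1)^2t^2\{a^2-a(4r-2)t+t^2\}, \] then $\rho(x;r,t,a)=0$.
   Context: The three-parametric MP density $\rho(x;r,t,a)$ ($r\in(0,1]$, $t>0$, $a\ge0$) is the density of the weak limit, as $N,M\to\infty$ with $N/M\to r$, of $\frac1N\sum_{j}\delta_{X^N_j(t)/M}$, where $X^N_j$ solve $dX^N_j=2\sqrt{X^N_j}dB_j+2(M-N+1)dt+4X^N_j\sum_{k\neq j}\frac{dt}{X^N_j-X^N_k}$ with independent standard Brownian motions $B_j$ and $X^N_j(0)=aM$; equivalently its Stieltjes transform $G$ solves $z=\frac1G+\frac{t}{1-rtG}+\frac{a}{(1-rtG)^2}$, and $\rho(x)=-\frac1\pi\lim_{\varepsilon\to0}\Im G(x+i\varepsilon)$. *)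

theory Defs
  imports "HOL-Complex_Analysis.Complex_Analysis"
begin

definition MP_S :: "real \<Rightarrow> real \<Rightarrow> real \<Rightarrow> real \<Rightarrow> real" where
  "MP_S x r t a =
     4*a*x^3 - (8*a^2 + 4*a*(3*r+2)*t - t^2)*x^2
     + 2*(2*a^3 - 2*a^2*(5*r-2)*t + a*(r*(6*r-1)+1)*t^2 - (r+1)*t^3)*x
     + (r-1)^2*t^2*(a^2 - a*(4*r-2)*t + t^2)"

text \<open>G is the Stieltjes transform of the three-parametric MP law: holomorphic on the
  upper half-plane, solving z = 1/G + t/(1-rtG) + a/(1-rtG)^2 there, with Im G \<le> 0
  and the normalisation z G(z) \<rightarrow> 1 at infinity (taken along the imaginary axis).\<close>
definition MP_stieltjes :: "real \<Rightarrow> real \<Rightarrow> real \<Rightarrow> (complex \<Rightarrow> complex) \<Rightarrow> bool" where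
  "MP_stieltjes r t a G \<longleftrightarrow>
     G holomorphic_on {z. 0 < Im z} \<and>
     (\<forall>z. 0 < Im z \<longrightarrow>
        G z \<noteq> 0 \<and> 1 - of_real (r*t) * G z \<noteq> 0 \<and> Im (G z) \<le> 0 \<and>
        z = 1 / G z + of_real t / (1 - of_real (r*t) * G z)
              + of_real a / (1 - of_real (r*t) * G z)^2) \<and>
     ((\<lambda>y::real. \<i> * of_real y * G (\<i> * of_real y)) \<longlongrightarrow> 1) at_top"

text \<open>rho(x) = -(1/pi) lim_{eps -> 0+} Im G(x + i eps).\<close>
definition MP_density_integrand :: "(complex \<Rightarrow> complex) \<Rightarrow> real \<Rightarrow> real \<Rightarrow> real" where
  "MP_density_integrand G x \<epsilon> = -(1/pi) * Im (G (of_real x + \<i> * of_real \<epsilon>))"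

end

theory Submission imports Defs begin

lemma disc_real:
  fixes c3 c2 c1 c0 p q :: real
  assumes c3: "c3 \<noteq> 0" and q: "q \<noteq> 0"
    and re: "c3*(p^3-3*p*q^2)+c2*(p^2-q^2)+c1*p+c0 = 0"
    and im: "c3*(3*p^2*q-q^3)+c2*(2*p*q)+c1*q = 0"
  shows "c2^2*c1^2 - 4*c3*c1^3 - 4*c2^3*c0 - 27*c3^2*c0^2 + 18*c3*c2*c1*c0 \<noteq> 0"
proof -
  define h where "h = -c2/c3 - 2*p"
  have e2: "c2 = -c3*(2*p+h)" using c3 by (simp add: h_def field_simps)
  have "q * (c3*(3*p^2-q^2)+c2*(2*p)+c1) = 0" using im by (simp add: algebra_simps power2_eq_square power3_eq_cube)
  hence e1': "c1 = -c3*(3*p^2-q^2) - c2*(2*p)" using q by simp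
  hence e1: "c1 = c3*(p^2+q^2+2*p*h)" using e2 by (simp add: algebra_simps power2_eq_square)
  have e0: "c0 = -c3*(p^2+q^2)*h" using re e1 e2 by (simp add: algebra_simps power2_eq_square power3_eq_cube)
  have "c2^2*c1^2 - 4*c3*c1^3 - 4*c2^3*c0 - 27*c3^2*c0^2 + 18*c3*c2*c1*c0
      = -4*q^2*c3^4*((p-h)^2+q^2)^2"
    unfolding e0 e1 e2 by algebra
  moreover have "(p-h)^2+q^2 > 0" using q by (simp add: add_nonneg_pos)
  ultimately show ?thesis using c3 q by simp
qed

lemma disc_cplx:
  fixes c3 c2 c1 c0 :: real and w :: complex
  assumes "c3 \<noteq> 0" "Im w \<noteq> 0"
    and "of_real c3*w^3+ of_real c2*w^2+ of_real c1*w+ of_real c0 = 0"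
  shows "c2^2*c1^2 - 4*c3*c1^3 - 4*c2^3*c0 - 27*c3^2*c0^2 + 18*c3*c2*c1*c0 \<noteq> 0"
proof -
  obtain p q where w: "w = Complex p q" by (cases w)
  have "Re (of_real c3*w^3+ of_real c2*w^2+ of_real c1*w+ of_real c0) = 0"
       "Im (of_real c3*w^3+ of_real c2*w^2+ of_real c1*w+ of_real c0) = 0"
    using assms(3) by simp_all
  hence re: "c3*(p^3-3*p*q^2)+c2*(p^2-q^2)+c1*p+c0 = 0"
    and im: "c3*(3*p^2*q-q^3)+c2*(2*p*q)+c1*q = 0"
    unfolding w by (simp_all add: power2_eq_square power3_eq_cube algebra_simps)
  show ?thesis by (rule disc_real[OF assms(1) _ re im]) (use assms(2) w in simp)
qed

lemma G_bound:
  fixes s t a x :: real and z g :: complex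
  assumes s: "s > 0" and t: "t \<ge> 0" and a: "a \<ge> 0" and x: "x > 0"
    and g0: "g \<noteq> 0" and k0: "1 - of_real s * g \<noteq> 0"
    and eq: "z = 1 / g + of_real t / (1 - of_real s * g) + of_real a / (1 - of_real s * g)^2"
    and zx: "cmod z \<ge> x"
  shows "cmod g \<le> max (4/x) ((max 1 (max (4*t/x) (4*a/x)) + 1)/s)"
proof (rule ccontr)
  define K where "K = max 1 (max (4*t/x) (4*a/x))"
  assume "\<not> ?thesis"
  hence gB: "cmod g > 4/x" "cmod g > (K+1)/s" unfolding K_def by auto
  have K1: "K \<ge> 1" "K \<ge> 4*t/x" "K \<ge> 4*a/x" unfolding K_def by auto
  define n where "n = cmod (1 - of_real s * g)"
  have "s * cmod g > K + 1" using gB(2) s by (simp add: field_simps)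
  moreover have "n \<ge> s * cmod g - 1"
  proof -
    have "cmod (of_real s * g) - cmod (1::complex) \<le> cmod (of_real s * g - 1)"
      by (rule norm_triangle_ineq2)
    thus ?thesis using s by (simp add: n_def norm_mult norm_minus_commute)
  qed
  ultimately have nK: "n > K" by simp
  have npos: "n > 0" using nK K1 by simp
  have "cmod z \<le> cmod (1/g) + cmod (of_real t / (1 - of_real s * g)) + cmod (of_real a / (1 - of_real s * g)^2)"
    unfolding eq by (rule order_trans[OF norm_triangle_ineq add_right_mono[OF norm_triangle_ineq]])
  also have "\<dots> = 1 / cmod g + t / n + a / n^2"
    using t a by (simp add: n_def norm_divide norm_power)
  also have "\<dots> < x/4 + x/4 + x/4"
  proof -
    have gpos: "cmod g > 0" using g0 by simp
    have "1 / cmod g < x/4" using gB(1) x gpos by (simp add: field_simps)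
    moreover have "t / n \<le> x/4"
    proof -
      have "t / n \<le> t / K" using t nK K1 by (intro divide_left_mono) auto
      also have "\<dots> \<le> x/4" using K1 x by (simp add: field_simps)
      finally show ?thesis .
    qed
    moreover have "a / n^2 \<le> x/4"
    proof -
      have "n * 1 \<le> n * n" using nK K1 by (intro mult_left_mono) auto
      hence "n^2 \<ge> K" using nK by (simp add: power2_eq_square)
      moreover have "0 < n^2 * K" using npos K1 by simp
      ultimately have "a / n^2 \<le> a / K" using a by (intro divide_left_mono) auto
      also have "\<dots> \<le> x/4" using K1 x by (simp add: field_simps)
      finally show ?thesis .
    qed
    ultimately show ?thesis by linarith
  qed
  finally show False using zx x by linarith
qed

theorem lemma2p4:
  fixes r t a x :: real and G :: "complex \<Rightarrow> complex"
  assumes "0 < r" "r \<le> 1" "0 < t" "0 \<le> a" "0 < x"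
    and "MP_stieltjes r t a G"
    and "MP_S x r t a = 0"
  shows "(MP_density_integrand G x \<longlongrightarrow> 0) (at_right 0)"
proof -
  note r = assms(1) and t = assms(3) and a = assms(4) and x = assms(5)
  define s where "s = r * t"
  have s: "s > 0" using r t by (simp add: s_def)
  have st: "\<And>z. 0 < Im z \<Longrightarrow> G z \<noteq> 0 \<and> 1 - of_real s * G z \<noteq> 0 \<and>
        z = 1 / G z + of_real t / (1 - of_real s * G z) + of_real a / (1 - of_real s * G z)^2"
    using assms(6) unfolding MP_stieltjes_def s_def by blast
  define Q where "Q = (\<lambda>(z::complex) g. z * g * (1 - of_real s * g)^2 - (1 - of_real s * g)^2
      - of_real t * g * (1 - of_real s * g) - of_real a * g)"
  have Qz: "Q z (G z) = 0" if "0 < Im z" for z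
  proof -
    define g where "g = G z"
    have g0: "g \<noteq> 0" and k0: "1 - of_real s * g \<noteq> 0"
      and eq: "z = 1 / g + of_real t / (1 - of_real s * g) + of_real a / (1 - of_real s * g)^2"
      using st[OF that] by (auto simp: g_def)
    define k where "k = 1 - of_real s * g"
    have k0': "k \<noteq> 0" using k0 by (simp add: k_def)
    have "z * g * k^2 = (1/g) * g * k^2 + of_real t / k * g * k^2 + of_real a / k^2 * g * k^2"
      unfolding eq k_def[symmetric] by (simp add: distrib_right)
    also have "(1/g) * g * k^2 = k^2" using g0 by simp
    also have "of_real t / k * g * k^2 = of_real t * g * k" using k0' by (simp add: power2_eq_square)
    also have "of_real a / k^2 * g * k^2 = of_real a * g" using k0' by simp
    finally have "z * g * (1 - of_real s * g)^2 = (1 - of_real s * g)^2 + of_real t * g * (1 - of_real s * g) + of_real a * g"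
      unfolding k_def .
    thus ?thesis unfolding Q_def g_def[symmetric] by (simp add: algebra_simps)
  qed
  define c3 where "c3 = x*r^2*t^2"
  define c2 where "c2 = -2*x*r*t - r^2*t^2 + r*t^2"
  define c1 where "c1 = x + 2*r*t - t - a"
  define c0 :: real where "c0 = -1"
  have Qcub: "Q (of_real x) g = of_real c3 * g^3 + of_real c2 * g^2 + of_real c1 * g + of_real c0" for g
    unfolding Q_def c3_def c2_def c1_def c0_def s_def by (simp add: algebra_simps power2_eq_square power3_eq_cube)
  have D: "c2^2*c1^2 - 4*c3*c1^3 - 4*c2^3*c0 - 27*c3^2*c0^2 + 18*c3*c2*c1*c0 = r^2*t^2 * MP_S x r t a"
    unfolding c3_def c2_def c1_def c0_def MP_S_def by (simp add: algebra_simps power2_eq_square power3_eq_cube)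
  have c3: "c3 \<noteq> 0" using r t x by (simp add: c3_def)
  have noroot: "Q (of_real x) g \<noteq> 0" if "Im g \<noteq> 0" for g
    using disc_cplx[OF c3 that] D assms(7) Qcub by auto
  define B where "B = max (4/x) ((max 1 (max (4*t/x) (4*a/x)) + 1)/s)"
  have Bpos: "B > 0" using x by (auto simp: B_def less_max_iff_disj)
  have bnd: "cmod (G z) \<le> B" if "0 < Im z" "cmod z \<ge> x" for z
    unfolding B_def using G_bound[OF s _ a x _ _ _ that(2)] st[OF that(1)] t by auto
  have lim: "((\<lambda>e. Im (G (of_real x + \<i> * of_real e))) \<longlongrightarrow> 0) (at_right 0)"
  proof (unfold tendsto_iff, intro allI impI)
    fix e :: real assume e: "e > 0"
    define Ks where "Ks = cball 0 B \<inter> {g. e \<le> \<bar>Im g\<bar>}"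
    have zprops: "0 < Im (of_real x + \<i> * of_real y) \<and> cmod (of_real x + \<i> * of_real y) \<ge> x" if "y > 0" for y
      using that abs_Re_le_cmod[of "of_real x + \<i> * of_real y"] x by simp
    show "\<forall>\<^sub>F y in at_right 0. dist (Im (G (of_real x + \<i> * of_real y))) 0 < e"
    proof (cases "Ks = {}")
      case True
      show ?thesis unfolding eventually_at_right_field
      proof (intro exI[of _ 1] conjI allI impI)
        fix y :: real assume "0 < y" "y < 1"
        hence "G (of_real x + \<i> * of_real y) \<in> cball 0 B" using bnd zprops by simp
        thus "dist (Im (G (of_real x + \<i> * of_real y))) 0 < e" using True unfolding Ks_def by auto
      qed simp
    next
      case False
      have "compact Ks" unfolding Ks_def
        by (intro compact_Int_closed compact_cball closed_Collect_le continuous_intros)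
      moreover have "continuous_on Ks (\<lambda>g. cmod (Q (of_real x) g))"
        unfolding Q_def by (intro continuous_intros)
      ultimately obtain g1 where g1: "g1 \<in> Ks" "\<And>g. g \<in> Ks \<Longrightarrow> cmod (Q (of_real x) g1) \<le> cmod (Q (of_real x) g)"
        using continuous_attains_inf[OF _ False] by metis
      define m where "m = cmod (Q (of_real x) g1)"
      have "Im g1 \<noteq> 0" using g1(1) e unfolding Ks_def by auto
      hence m: "m > 0" using noroot unfolding m_def by simp
      define b where "b = m / (B * (1 + s*B)^2 + 1)"
      have "0 \<le> B * (1 + s*B)^2" using Bpos by (intro mult_nonneg_nonneg) auto
      hence den: "B * (1 + s*B)^2 + 1 > 0" by linarith
      show ?thesis unfolding eventually_at_right_field
      proof (intro exI[of _ b] conjI allI impI)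
        show "b > 0" unfolding b_def using m den by simp
        fix y :: real assume y: "0 < y" "y < b"
        define z where "z = of_real x + \<i> * of_real y"
        define g where "g = G z"
        have gB: "cmod g \<le> B" unfolding g_def z_def using bnd zprops y by simp
        have "Q z g = 0" unfolding g_def using Qz zprops y z_def by simp
        hence "Q (of_real x) g = - (\<i> * of_real y) * g * (1 - of_real s * g)^2"
          unfolding Q_def z_def by (simp add: algebra_simps)
        hence "cmod (Q (of_real x) g) = y * cmod g * (cmod (1 - of_real s * g))^2"
          using y by (simp add: norm_mult norm_power)
        also have "\<dots> \<le> y * B * (1 + s*B)^2"
        proof -
          have "cmod (1 - of_real s * g) \<le> 1 + s * B"
          proof -
            have "cmod (1 - of_real s * g) \<le> cmod (1::complex) + cmod (of_real s * g)"
              by (rule norm_triangle_ineq4)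
            also have "\<dots> \<le> 1 + s * B" using s gB by (simp add: norm_mult mult_left_mono)
            finally show ?thesis .
          qed
          hence "(cmod (1 - of_real s * g))^2 \<le> (1 + s*B)^2" by (intro power_mono) auto
          thus ?thesis using y gB Bpos by (intro mult_mono) auto
        qed
        also have "\<dots> \<le> y * (B * (1 + s*B)^2 + 1)" using y by (simp add: algebra_simps)
        also have "\<dots> < b * (B * (1 + s*B)^2 + 1)" using y den by simp
        also have "\<dots> = m" unfolding b_def using den by simp
        finally have "cmod (Q (of_real x) g) < m" .
        hence "g \<notin> Ks" using g1(2) unfolding m_def by force
        thus "dist (Im (G (of_real x + \<i> * of_real y))) 0 < e"
          using gB unfolding Ks_def g_def z_def by auto
      qed
    qed
  qed
  have "((\<lambda>e. -(1/pi) * Im (G (of_real x + \<i> * of_real e))) \<longlongrightarrow> -(1/pi) * 0) (at_right 0)"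
    by (intro tendsto_mult tendsto_const lim)
  thus ?thesis unfolding MP_density_integrand_def[abs_def] by simp
qed

end
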